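(* Let $G$ be a maximal triangle-free graph on $n$ vertices with chromatic number $k$ and maximum degree $d$, and let $v$ be a vertex of maximum degree. Let $G'$ be the subgraph of $G$ induced by $V(G)\setminus(N(v)\cup\{v\})$. Then $G'$ is a triangle-free graph on $n-d-1$ vertices with maximum degree at most $d-1$, and its chromatic number is $k-1$ or $k$.
   Context: All graphs are finite, simple and undirected. A graph is triangle-free if it has no cycle of length $3$. A maximal triangle-free (mtf) graph is a triangle-free graph such that adding any new edge between two non-adjacent vertices creates a triangle. $N(v)$ denotes the set of neighbours of $v$. *)

theory Defs
  imports Main
begin

text \<open>Subgraphs induced by W \<subseteq> V are represented by (W, E).\<close>

definition simple_graph :: "'a set \<Rightarrow> ('a \<Rightarrow> 'a \<Rightarrow> bool) \<Rightarrow> bool" where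
  "simple_graph V E \<longleftrightarrow> finite V \<and> (\<forall>x\<in>V. \<forall>y\<in>V. E x y \<longrightarrow> E y x) \<and> (\<forall>x\<in>V. \<not> E x x)"

definition neighbours :: "'a set \<Rightarrow> ('a \<Rightarrow> 'a \<Rightarrow> bool) \<Rightarrow> 'a \<Rightarrow> 'a set" where
  "neighbours V E v = {u \<in> V. E v u}"

definition degree :: "'a set \<Rightarrow> ('a \<Rightarrow> 'a \<Rightarrow> bool) \<Rightarrow> 'a \<Rightarrow> nat" where
  "degree V E v = card (neighbours V E v)"

definition max_degree :: "'a set \<Rightarrow> ('a \<Rightarrow> 'a \<Rightarrow> bool) \<Rightarrow> nat" where
  "max_degree V E = Max (insert 0 (degree V E ` V))"

definition triangle_free :: "'a set \<Rightarrow> ('a \<Rightarrow> 'a \<Rightarrow> bool) \<Rightarrow> bool" where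
  "triangle_free V E \<longleftrightarrow> \<not> (\<exists>x\<in>V. \<exists>y\<in>V. \<exists>z\<in>V. E x y \<and> E y z \<and> E x z)"

text \<open>Maximal triangle-free: triangle-free, and adding any edge between two distinct
  non-adjacent vertices creates a triangle (i.e. they have a common neighbour).\<close>
definition mtf :: "'a set \<Rightarrow> ('a \<Rightarrow> 'a \<Rightarrow> bool) \<Rightarrow> bool" where
  "mtf V E \<longleftrightarrow> triangle_free V E \<and>
     (\<forall>x\<in>V. \<forall>y\<in>V. x \<noteq> y \<and> \<not> E x y \<longrightarrow> (\<exists>z\<in>V. E x z \<and> E z y))"

definition proper_colouring :: "'a set \<Rightarrow> ('a \<Rightarrow> 'a \<Rightarrow> bool) \<Rightarrow> nat \<Rightarrow> ('a \<Rightarrow> nat) \<Rightarrow> bool" where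
  "proper_colouring V E k c \<longleftrightarrow> (\<forall>x\<in>V. c x < k) \<and> (\<forall>x\<in>V. \<forall>y\<in>V. E x y \<longrightarrow> c x \<noteq> c y)"

definition chromatic_number :: "'a set \<Rightarrow> ('a \<Rightarrow> 'a \<Rightarrow> bool) \<Rightarrow> nat" where
  "chromatic_number V E = (LEAST k. \<exists>c. proper_colouring V E k c)"

end

theory Submission
  imports Defs
begin

theorem proposition1:
  fixes V :: "'a set" and E :: "'a \<Rightarrow> 'a \<Rightarrow> bool" and n k d :: nat and v :: 'a
  assumes "simple_graph V E"
    and "mtf V E"
    and "card V = n"
    and "chromatic_number V E = k"
    and "max_degree V E = d"
    and "v \<in> V"
    and "degree V E v = d"
  shows "let V' = V - (neighbours V E v \<union> {v}) in
           triangle_free V' E \<and> card V' = n - d - 1 \<and>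
           (\<forall>u\<in>V'. degree V' E u \<le> d - 1) \<and>
           (V' \<noteq> {} \<longrightarrow> chromatic_number V' E = k - 1 \<or> chromatic_number V' E = k)"
proof -
  define N where "N = neighbours V E v"
  define V' where "V' = V - (N \<union> {v})"
  have fin: "finite V" and sym: "\<And>x y. x\<in>V \<Longrightarrow> y\<in>V \<Longrightarrow> E x y \<Longrightarrow> E y x"
    and irr: "\<And>x. x \<in> V \<Longrightarrow> \<not> E x x" using assms(1) unfolding simple_graph_def by auto
  have tf: "triangle_free V E" and mx: "\<And>x y. x\<in>V \<Longrightarrow> y\<in>V \<Longrightarrow> x \<noteq> y \<Longrightarrow> \<not> E x y \<Longrightarrow> \<exists>z\<in>V. E x z \<and> E z y"
    using assms(2) unfolding mtf_def by auto
  have NV: "N \<subseteq> V" unfolding N_def neighbours_def by auto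
  have vN: "v \<notin> N" using irr assms(6) unfolding N_def neighbours_def by auto
  have cardN: "card N = d" using assms(7) unfolding N_def degree_def by simp
  have degle: "\<And>u. u \<in> V \<Longrightarrow> degree V E u \<le> d"
    using assms(5) fin unfolding max_degree_def by (metis Max_ge finite_imageI finite_insert image_eqI insertCI)
  have t1: "triangle_free V' E" using tf unfolding triangle_free_def V'_def by blast
  have t2: "card V' = n - d - 1"
  proof -
    have "card (N \<union> {v}) = d + 1" using vN cardN fin NV finite_subset by fastforce
    moreover have "N \<union> {v} \<subseteq> V" using NV assms(6) by auto
    ultimately show ?thesis unfolding V'_def using card_Diff_subset fin assms(3)
      by (metis diff_diff_left finite_subset)
  qed
  have t3: "\<forall>u\<in>V'. degree V' E u \<le> d - 1"
  proof
    fix u assume u: "u \<in> V'"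
    hence uV: "u \<in> V" and "u \<noteq> v" and "\<not> E v u" unfolding V'_def N_def neighbours_def by auto
    then obtain z where z: "z \<in> V" "E v z" "E z u" using mx[OF assms(6) uV] by metis
    have zN: "z \<in> N" using z unfolding N_def neighbours_def by auto
    have Euz: "E u z" using sym z uV by blast
    have "{w \<in> V'. E u w} \<subseteq> {w \<in> V. E u w} - {z}" using zN unfolding V'_def by auto
    hence "card {w \<in> V'. E u w} \<le> card ({w \<in> V. E u w} - {z})" using fin by (simp add: card_mono)
    also have "\<dots> = degree V E u - 1" unfolding degree_def neighbours_def using z Euz
      by (simp add: card_Diff_singleton)
    finally show "degree V' E u \<le> d - 1" using degle[OF uV] unfolding degree_def neighbours_def by simp
  qed
  have t4: "V' \<noteq> {} \<longrightarrow> chromatic_number V' E = k - 1 \<or> chromatic_number V' E = k"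
  proof
    assume ne: "V' \<noteq> {}"
    obtain h where h: "bij_betw h V {0..<card V}" using ex_bij_betw_finite_nat[OF fin] by blast
    have "proper_colouring V E (card V) h" unfolding proper_colouring_def
    proof (intro conjI ballI impI)
      fix x assume "x \<in> V" thus "h x < card V" using h by (auto simp: bij_betw_def)
    next
      fix x y assume "x \<in> V" "y \<in> V" "E x y"
      hence "x \<noteq> y" using irr by auto
      thus "h x \<noteq> h y" using h \<open>x\<in>V\<close> \<open>y\<in>V\<close> by (auto simp: bij_betw_def inj_on_def)
    qed
    hence "\<exists>c. proper_colouring V E k c" using assms(4) LeastI_ex[of "\<lambda>k. \<exists>c. proper_colouring V E k c"]
      unfolding chromatic_number_def by blast
    then obtain c where c: "proper_colouring V E k c" by blast
    have "proper_colouring V' E k c" using c unfolding proper_colouring_def V'_def by auto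
    hence le: "chromatic_number V' E \<le> k" unfolding chromatic_number_def by (blast intro: Least_le)
    define m where "m = chromatic_number V' E"
    have "\<exists>c. proper_colouring V' E m c" using \<open>proper_colouring V' E k c\<close>
      LeastI_ex[of "\<lambda>k. \<exists>c. proper_colouring V' E k c"] unfolding m_def chromatic_number_def by blast
    then obtain c' where c': "proper_colouring V' E m c'" by blast
    have m1: "m \<ge> 1" using ne c' unfolding proper_colouring_def by fastforce
    define c'' where "c'' = (\<lambda>x. if x \<in> N then m else if x = v then 0 else c' x)"
    have "proper_colouring V E (m + 1) c''" unfolding proper_colouring_def
    proof (intro conjI ballI impI)
      fix x assume "x \<in> V" thus "c'' x < m + 1" using c' unfolding c''_def proper_colouring_def V'_def by (auto simp: less_Suc_eq)
    next
      fix x y assume xy: "x \<in> V" "y \<in> V" "E x y"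
      have tri: "\<not> (x \<in> N \<and> y \<in> N)" using tf xy assms(6) unfolding triangle_free_def N_def neighbours_def by blast
      have a: "\<not> (x = v \<and> y \<notin> N)" using xy unfolding N_def neighbours_def by auto
      have b: "\<not> (y = v \<and> x \<notin> N)" using xy sym assms(6) unfolding N_def neighbours_def by auto
      have "x \<noteq> y" using xy irr by auto
      show "c'' x \<noteq> c'' y"
        using tri a b m1 c' xy \<open>x \<noteq> y\<close> vN unfolding c''_def proper_colouring_def V'_def
        by (auto split: if_splits)
    qed
    hence "k \<le> m + 1" using assms(4) unfolding chromatic_number_def by (blast intro: Least_le)
    thus "chromatic_number V' E = k - 1 \<or> chromatic_number V' E = k" using le m_def by linarith
  qed
  show ?thesis using t1 t2 t3 t4 unfolding V'_def N_def Let_def by simp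
qed

end
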